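(* Let $\nu\in\mathbb{C}$, $k\in\mathbb{N}$, $\epsilon_1,\epsilon_2\in\{\pm1\}$, $E_0=\epsilon_1(4k+2)+4\epsilon_2\nu$, and $$Y(z)=z^{2\epsilon_1\epsilon_2\nu+1}e^{-\epsilon_1z^2/2}\,{}_1F_1(-k,2\epsilon_1\epsilon_2\nu+1,\epsilon_1z^2)$$ (with ${}_1F_1$ replaced by its regularization $\frac{\Gamma(2\epsilon_1\epsilon_2\nu+1+k)}{\Gamma(2\epsilon_1\epsilon_2\nu+1)}{}_1F_1(\cdots)$ when needed). Then there exists $M\in\mathbb{C}(z,E)$, regular at $E=E_0$, with $M(z,E_0)=-Y'(z)/Y(z)$ and such that $$H(z,E):=M^2z^2+Mz-M'z^2-z^4+z^2E-4\nu^2+1=O((E-E_0)^2)\quad (E\to E_0)$$ if and only if $2\epsilon_1\epsilon_2\nu+k\in\mathbb{N}$.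
   Context: $'$ denotes $\partial/\partial z$. $Y$ is a hyperexponential solution of $z^2Y''-zY'+(-z^4+E_0z^2-4\nu^2+1)Y=0$; equivalently $M(z,E_0)=-Y'/Y$ makes $H(z,E_0)=0$. In the paper, this expresses that the polynomial $w(E)$ in the factorization $H=w(E)P(z)/Q(z,E)$ may have a double root at $E_0$, which is required for the resulting potential to be quantum integrable. *)

theory Defs
  imports "HOL-Analysis.Analysis" "HOL-Computational_Algebra.Polynomial"
begin

text \<open>Bivariate polynomials in (z,E) are encoded as polynomials in E whose
coefficients are polynomials in z, i.e. the type complex poly poly.
A rational function M in C(z,E) is written as P/Q with P, Q such polynomials.\<close>

definition varZ :: "complex poly poly" where "varZ = [:[:0, 1:]:]"
definition varE :: "complex poly poly" where "varE = [:0, 1:]"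

definition zderiv :: "complex poly poly \<Rightarrow> complex poly poly" where
  "zderiv p = map_poly pderiv p"

text \<open>Numerator of H(z,E) = M^2 z^2 + M z - M' z^2 - z^4 + z^2 E - 4 nu^2 + 1
  for M = P/Q; H = Hnum nu P Q / Q^2.\<close>
definition Hnum :: "complex \<Rightarrow> complex poly poly \<Rightarrow> complex poly poly \<Rightarrow> complex poly poly" where
  "Hnum \<nu> P Q =
     P^2 * varZ^2 + P * Q * varZ - (zderiv P * Q - P * zderiv Q) * varZ^2
     + (varZ^2 * varE - varZ^4 - [:[:4 * \<nu>^2 - 1:]:]) * Q^2"

text \<open>Regularized Kummer polynomial: (b)_k * 1F1(-k; b; x)
  = sum_{j<=k} (-k)_j (b+j)_{k-j} x^j / j!  (equals Gamma(b+k)/Gamma(b) 1F1(-k;b;x)).\<close>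
definition kummerReg :: "nat \<Rightarrow> complex \<Rightarrow> complex \<Rightarrow> complex" where
  "kummerReg k b x = (\<Sum>j\<le>k. pochhammer (- of_nat k) j * pochhammer (b + of_nat j) (k - j)
                              / fact j * x ^ j)"

definition Yfun :: "complex \<Rightarrow> nat \<Rightarrow> int \<Rightarrow> int \<Rightarrow> complex \<Rightarrow> complex" where
  "Yfun \<nu> k \<epsilon>1 \<epsilon>2 z =
     (let b = 2 * of_int \<epsilon>1 * of_int \<epsilon>2 * \<nu> + 1 in
      z powr b * exp (- of_int \<epsilon>1 * z^2 / 2) * kummerReg k b (of_int \<epsilon>1 * z^2))"

end

theory Submission
  imports Defs "HOL-Computational_Algebra.Polynomial_Factorial" "HOL-Computational_Algebra.Field_as_Ring"
begin

lemma zderiv_pCons: "zderiv (pCons a p) = pCons (pderiv a) (zderiv p)"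
  unfolding zderiv_def by (simp add: map_poly_pCons)

lemma zderiv_poly_const: "poly (zderiv P) [:e:] = pderiv (poly P [:e:])"
proof (induction P)
  case 0 then show ?case by (simp add: zderiv_def)
next
  case (pCons a p)
  then show ?case by (simp add: zderiv_pCons pderiv_add pderiv_mult pderiv_smult)
qed

lemma pderiv_zderiv: "pderiv (zderiv P) = zderiv (pderiv P)"
  by (rule poly_eqI) (simp add: zderiv_def coeff_pderiv coeff_map_poly pderiv_mult pderiv_add)

definition h0 :: "complex \<Rightarrow> complex \<Rightarrow> complex poly \<Rightarrow> complex poly \<Rightarrow> complex poly" where
  "h0 \<nu> E0 A D = A^2 * [:0,1:]^2 + A * D * [:0,1:] - (pderiv A * D - A * pderiv D) * [:0,1:]^2
      + ([:0,1:]^2 * [:E0:] - [:0,1:]^4 - [:4 * \<nu>^2 - 1:]) * D^2"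

definition h1g :: "complex \<Rightarrow> complex \<Rightarrow> complex poly \<Rightarrow> complex poly \<Rightarrow> complex poly \<Rightarrow> complex poly \<Rightarrow> complex poly" where
  "h1g \<nu> E0 p0 q0 p1 q1 = 2 * p0 * p1 * [:0,1:]^2 + (p1 * q0 + p0 * q1) * [:0,1:]
     - (pderiv p1 * q0 + pderiv p0 * q1 - p1 * pderiv q0 - p0 * pderiv q1) * [:0,1:]^2
     + [:0,1:]^2 * q0^2 + ([:0,1:]^2 * [:E0:] - [:0,1:]^4 - [:4 * \<nu>^2 - 1:]) * (2 * q0 * q1)"

lemma EV0: "poly (Hnum \<nu> P Q) [:E0:] = h0 \<nu> E0 (poly P [:E0:]) (poly Q [:E0:])"
  by (simp add: Hnum_def h0_def varZ_def varE_def zderiv_poly_const)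

lemma EV1: "poly (pderiv (Hnum \<nu> P Q)) [:E0:] =
   h1g \<nu> E0 (poly P [:E0:]) (poly Q [:E0:]) (poly (pderiv P) [:E0:]) (poly (pderiv Q) [:E0:])"
  apply (simp add: Hnum_def h1g_def varZ_def varE_def zderiv_poly_const pderiv_add pderiv_diff
     pderiv_mult pderiv_power pderiv_zderiv pderiv_pCons pderiv_smult)
  apply (simp add: algebra_simps power2_eq_square)
  done

lemma dvd2_iff:
  fixes h :: "'a::idom poly"
  shows "[:-c, 1:]^2 dvd h \<longleftrightarrow> poly h c = 0 \<and> poly (pderiv h) c = 0"
proof
  assume "[:-c, 1:]^2 dvd h"
  then obtain r where r: "h = [:-c, 1:]^2 * r" by auto
  show "poly h c = 0 \<and> poly (pderiv h) c = 0"
    by (simp add: r pderiv_mult pderiv_power pderiv_pCons)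
next
  assume a: "poly h c = 0 \<and> poly (pderiv h) c = 0"
  then have "[:-c, 1:] dvd h" by (simp add: poly_eq_0_iff_dvd)
  then obtain g where g: "h = [:-c, 1:] * g" by auto
  have d: "pderiv [:-c,1:] = 1" by (simp add: pderiv_pCons)
  have "pderiv h = [:-c,1:] * pderiv g + g * pderiv [:-c,1:]" by (simp only: g pderiv_mult)
  then have "pderiv h = g + [:-c,1:] * pderiv g" by (simp only: d mult_1_right add.commute)
  then have "poly g c = 0" using a by simp
  then have "[:-c, 1:] dvd g" by (simp add: poly_eq_0_iff_dvd)
  then obtain g2 where "g = [:-c, 1:] * g2" by auto
  then have "h = [:-c, 1:]^2 * g2" by (simp only: g power2_eq_square mult.assoc)
  then show "[:-c, 1:]^2 dvd h" by simp
qed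

abbreviation "Zp \<equiv> ([:0,1:] :: complex poly)"

definition cc :: "nat \<Rightarrow> complex \<Rightarrow> nat \<Rightarrow> complex" where
  "cc k b j = pochhammer (- of_nat k) j * pochhammer (b + of_nat j) (k - j) / fact j"

definition Fp :: "nat \<Rightarrow> complex \<Rightarrow> complex poly" where
  "Fp k b = (\<Sum>j\<le>k. monom (cc k b j) j)"

definition fz :: "nat \<Rightarrow> complex \<Rightarrow> complex \<Rightarrow> complex poly" where
  "fz k b e = Fp k b \<circ>\<^sub>p [:0, 0, e:]"

definition N0 :: "nat \<Rightarrow> complex \<Rightarrow> complex \<Rightarrow> complex poly" where
  "N0 k b e = -(smult b (fz k b e) - smult e (Zp^2 * fz k b e) + Zp * pderiv (fz k b e))"

lemma cc_zero: "k < j \<Longrightarrow> cc k b j = 0"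
  by (simp add: cc_def pochhammer_of_nat_eq_0_lemma)

lemma coeff_Fp: "coeff (Fp k b) j = cc k b j"
  by (auto simp: Fp_def coeff_sum coeff_monom cc_zero)

lemma poly_Fp: "poly (Fp k b) x = kummerReg k b x"
  by (simp add: Fp_def kummerReg_def poly_sum poly_monom cc_def)

lemma cc_rec: "of_nat (Suc j) * (b + of_nat j) * cc k b (Suc j) = (of_nat j - of_nat k) * cc k b j"
proof (cases "j < k")
  case True
  then obtain m where m: "k - j = Suc m" by (metis Suc_diff_Suc)
  then have m2: "k - Suc j = m" by simp
  have "of_nat (Suc j) * (b + of_nat j) * cc k b (Suc j)
      = (b + of_nat j) * pochhammer (- of_nat k) (Suc j) * pochhammer (b + of_nat (Suc j)) m / fact j"
  proof -
    have f: "(fact (Suc j) :: complex) = of_nat (Suc j) * fact j" by (simp add: fact_Suc)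
    have nz: "(fact j :: complex) \<noteq> 0" "(of_nat (Suc j) :: complex) \<noteq> 0" by (simp, rule of_nat_neq_0)
    have nz2: "1 + (of_nat j :: complex) \<noteq> 0" using of_nat_neq_0[of j, where ?'a=complex] by simp
    show ?thesis unfolding cc_def m2 f using nz by (simp add: field_simps del: of_nat_Suc)
  qed
  also have "\<dots> = pochhammer (- of_nat k) (Suc j) * pochhammer (b + of_nat j) (Suc m) / fact j"
    by (simp add: pochhammer_rec ac_simps)
  also have "\<dots> = (of_nat j - of_nat k) * cc k b j"
    by (simp add: cc_def m pochhammer_Suc algebra_simps)
  finally show ?thesis .
next
  case False
  then show ?thesis
    by (cases "j = k") (simp_all add: cc_zero)
qed

lemma kummer_ode:
  "Zp * pderiv (pderiv (Fp k b)) + ([:b:] - Zp) * pderiv (Fp k b) + [:of_nat k:] * Fp k b = 0"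
proof (rule poly_eqI)
  fix n
  have r: "of_nat (Suc n) * (b + of_nat n) * cc k b (Suc n) + (of_nat k - of_nat n) * cc k b n = 0"
    using cc_rec[of n b k] by (simp add: algebra_simps)
  show "coeff (Zp * pderiv (pderiv (Fp k b)) + ([:b:] - Zp) * pderiv (Fp k b) + [:of_nat k:] * Fp k b) n = coeff 0 n"
  proof (cases n)
    case 0
    then show ?thesis using r by (simp add: coeff_pderiv coeff_Fp algebra_simps)
  next
    case (Suc m)
    then show ?thesis using r by (simp add: coeff_pderiv coeff_Fp algebra_simps)
  qed
qed

lemma const_poly_eqs:
  fixes a b :: "'a::comm_ring_1"
  shows "[:a + b:] = [:a:] + [:b:]" "[:a - b:] = [:a:] - [:b:]" "[:a * b:] = [:a:] * [:b:]"
    "[:-a:] = - [:a:]" "[:numeral m:] = numeral m" "[:1:] = 1" "[:of_nat n:] = of_nat n"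
  by (simp_all add: mult_to_poly of_nat_poly numeral_poly)

lemma smult_as_mult: "smult a p = [:a:] * p" by simp

lemma Kz_abs:
  fixes Z A0 A1 A2 B E K :: "'a::comm_ring_1"
  assumes "(E*Z^2)*A2 + (B - E*Z^2)*A1 + K*A0 = 0"
  shows "Z*((A2*(2*E*Z))*(2*E*Z) + A1*(2*E)) + (2*B - 1 - 2*E*Z^2)*(A1*(2*E*Z)) + 4*E*K*Z*A0 = 0"
proof -
  have "Z*((A2*(2*E*Z))*(2*E*Z) + A1*(2*E)) + (2*B - 1 - 2*E*Z^2)*(A1*(2*E*Z)) + 4*E*K*Z*A0
      = 4*E*Z*((E*Z^2)*A2 + (B - E*Z^2)*A1 + K*A0)"
    by (simp add: algebra_simps eval_nat_numeral)
  then show ?thesis using assms by simp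
qed

lemma pderiv_q: "pderiv [:0, 0, e:] = 2 * [:e:] * Zp"
  by (simp add: pderiv_pCons) (simp add: algebra_simps numeral_poly)

lemma q_eq: "[:0, 0, e:] = [:e:] * Zp^2"
  by (simp add: power2_eq_square)

lemma Kz: "Zp * pderiv (pderiv (fz k b e)) + (2 * [:b:] - 1 - 2*[:e:]*Zp^2) * pderiv (fz k b e)
     + 4 * [:e:] * of_nat k * Zp * fz k b e = 0"
proof -
  let ?q = "[:0, 0, e:] :: complex poly"
  have K: "(pderiv (pderiv (Fp k b)) \<circ>\<^sub>p ?q) * ?q + ([:b:] - ?q) * (pderiv (Fp k b) \<circ>\<^sub>p ?q)
     + of_nat k * (Fp k b \<circ>\<^sub>p ?q) = 0"
    using arg_cong[OF kummer_ode[where b=b and k=k], of "\<lambda>p. p \<circ>\<^sub>p ?q"]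
    by (simp add: pcompose_add pcompose_mult pcompose_diff pcompose_pCons pcompose_smult smult_diff_right of_nat_poly ac_simps)
  have d1: "pderiv (fz k b e) = (pderiv (Fp k b) \<circ>\<^sub>p ?q) * (2 * [:e:] * Zp)"
    by (simp add: fz_def pderiv_pcompose pderiv_q)
  have d2: "pderiv (pderiv (fz k b e)) = ((pderiv (pderiv (Fp k b)) \<circ>\<^sub>p ?q) * (2 * [:e:] * Zp)) * (2 * [:e:] * Zp)
       + (pderiv (Fp k b) \<circ>\<^sub>p ?q) * (2 * [:e:])"
  proof -
    define Qd where "Qd = 2 * [:e:] * Zp"
    have pQ: "pderiv Qd = 2 * [:e:]"
      unfolding Qd_def by (simp add: pderiv_pCons numeral_poly)
    have pq: "pderiv ?q = Qd" unfolding Qd_def by (rule pderiv_q)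
    have "pderiv (pderiv (fz k b e)) = ((pderiv (pderiv (Fp k b)) \<circ>\<^sub>p ?q) * Qd) * Qd
       + (pderiv (Fp k b) \<circ>\<^sub>p ?q) * (2 * [:e:])"
      by (simp only: d1 flip: Qd_def) (simp only: pderiv_mult pderiv_pcompose pq pQ mult.assoc mult.commute mult.left_commute add.commute)
    then show ?thesis unfolding Qd_def .
  qed
  show ?thesis
    apply (subst d2)
    apply (subst d1)
    apply (unfold fz_def)
    apply (rule Kz_abs)
    using K by (simp add: q_eq ac_simps)
qed

lemma H0id:
  fixes z f f1 f2 b e kk :: "'a::comm_ring_1"
  assumes Kz: "z*f2 + (2*b - 1 - 2*e*z^2)*f1 + 4*e*kk*z*f = 0" and e2: "e^2 = 1"
  shows "(-(b*f - e*z^2*f + z*f1))^2*z^2 + (-(b*f - e*z^2*f + z*f1))*(z*f)*z - ((-(b*f1 - 2*e*z*f - e*z^2*f1 + f1 + z*f2))*(z*f) - (-(b*f - e*z^2*f + z*f1))*(f + z*f1))*z^2 + (z^2*(2*e*(2*kk+b)) - z^4 - (b^2-2*b))*(z*f)^2 = 0"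
proof -
  have "(-(b*f - e*z^2*f + z*f1))^2*z^2 + (-(b*f - e*z^2*f + z*f1))*(z*f)*z - ((-(b*f1 - 2*e*z*f - e*z^2*f1 + f1 + z*f2))*(z*f) - (-(b*f - e*z^2*f + z*f1))*(f + z*f1))*z^2 + (z^2*(2*e*(2*kk+b)) - z^4 - (b^2-2*b))*(z*f)^2
     = z^3*f*(z*f2 + (2*b - 1 - 2*e*z^2)*f1 + 4*e*kk*z*f) + (e^2 - 1)*z^6*f^2"
    by (simp add: algebra_simps eval_nat_numeral)
  then show ?thesis using assms by simp
qed

lemma N0_alt: "N0 k b e = -([:b:]*fz k b e - [:e:]*Zp^2*fz k b e + Zp*pderiv (fz k b e))"
  by (simp add: N0_def)

lemma pderiv_N0: "pderiv (N0 k b e) = -([:b:]*pderiv (fz k b e) - 2*[:e:]*Zp*fz k b e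
   - [:e:]*Zp^2*pderiv (fz k b e) + pderiv (fz k b e) + Zp*pderiv (pderiv (fz k b e)))"
proof -
  define B where "B = [:b:]"
  define E where "E = [:e:]"
  define Z where "Z = Zp"
  define F where "F = fz k b e"
  have a: "pderiv B = 0" "pderiv E = 0" "pderiv Z = 1" "pderiv (Z^2) = 2*Z"
    by (simp_all add: B_def E_def Z_def pderiv_pCons pderiv_power numeral_poly)
  have "pderiv (-(B*F - E*Z^2*F + Z*pderiv F)) = -(B*pderiv F - 2*E*Z*F
   - E*Z^2*pderiv F + pderiv F + Z*pderiv (pderiv F))"
    by (simp only: pderiv_minus pderiv_diff pderiv_add pderiv_mult a) (simp add: algebra_simps)
  then show ?thesis unfolding N0_alt B_def E_def Z_def F_def .
qed

lemma H0_N0: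
  fixes b e E0 \<nu> :: complex
  assumes E0: "E0 = 2*e*(2 * of_nat k + b)" and nu: "4*\<nu>^2 - 1 = b^2 - 2*b" and e2: "e^2 = 1"
  shows "h0 \<nu> E0 (N0 k b e) (Zp * fz k b e) = 0"
proof -
  have c1: "[:E0:] = 2*[:e:]*(2 * of_nat k + [:b:])" unfolding E0
    by (simp add: numeral_poly of_nat_poly)
  have c2: "[:4 * \<nu>^2 - 1:] = [:b:]^2 - 2*[:b:]" unfolding nu
    by (simp add: numeral_poly power2_eq_square)
  have e2': "[:e:]^2 = 1" using e2 by (simp add: power2_eq_square one_pCons)
  have pz: "pderiv (Zp * fz k b e) = fz k b e + Zp * pderiv (fz k b e)"
    by (simp add: pderiv_mult pderiv_pCons)
  show ?thesis
    unfolding h0_def c1 c2 pz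
    unfolding pderiv_N0
    unfolding N0_alt
    by (rule H0id[OF Kz e2'])
qed

lemma absA:
  fixes z EE KK p0 p0d q0 q0d p1 p1d q1 q1d :: "'a::comm_ring_1"
  shows "q0^2 * (2*p0*p1*z^2 + (p1*q0 + p0*q1)*z - (p1d*q0 + p0d*q1 - p1*q0d - p0*q1d)*z^2
           + z^2*q0^2 + (z^2*EE - z^4 - KK)*(2*q0*q1))
       = 2*q0*q1*(p0^2*z^2 + p0*q0*z - (p0d*q0 - p0*q0d)*z^2 + (z^2*EE - z^4 - KK)*q0^2)
         + (2*(p0*q0)*(p1*q0 - p0*q1)*z^2 + (p1*q0 - p0*q1)*(q0^2)*z
           - ((p1d*q0 + p1*q0d - p0d*q1 - p0*q1d)*(q0^2) + (p0*q0)*0*0 - (p1*q0 - p0*q1)*(2*q0*q0d) - (p0*q0)*0)*z^2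
           + z^2*(q0^2)^2 + (z^2*EE - z^4 - KK)*(2*(q0^2)*0))"
  by (simp add: algebra_simps eval_nat_numeral)

lemma absB:
  fixes z b e f f1 p0 q0 q0d W Wd :: "'a::comm_ring_1"
  shows "z*f^2*(2*(p0*q0)*W*z^2 + W*(q0^2)*z - (Wd*(q0^2) - W*(2*q0*q0d))*z^2 + z^2*(q0^2)^2)
    = -(z^2*(z*((2*f*f1*W + f^2*Wd)*q0^2 - f^2*W*(2*q0*q0d)) + (2*b - 1 - 2*e*z^2)*(f^2*W)*(q0^2) - z*f^2*(q0^2)^2))
      + 2*f*q0*W*z^2*(p0*(z*f) - (-(b*f - e*z^2*f + z*f1))*q0)"
  by (simp add: algebra_simps eval_nat_numeral)

definition ZZ :: "complex poly" where "ZZ = [:0, 1:]"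

lemma pderiv_ZZ: "pderiv ZZ = 1" by (simp add: ZZ_def pderiv_pCons)
lemma ZZ_nz: "ZZ \<noteq> 0" by (simp add: ZZ_def)
lemma poly_ZZ: "poly ZZ x = x" by (simp add: ZZ_def)
lemma prime_ZZ: "prime_elem ZZ" unfolding ZZ_def by (rule prime_elem_linear_field_poly) simp

definition Jf :: "complex poly \<Rightarrow> complex poly \<Rightarrow> complex poly \<Rightarrow> complex poly \<Rightarrow> complex poly" where
  "Jf C R A B = ZZ*(pderiv A*B - A*pderiv B) + C*A*B - R*B^2"

lemma absC:
  fixes z g gd A Ad B Bd C R :: "'a::comm_ring_1"
  shows "z*((g*Ad + A*gd)*(g*B) - (g*A)*(g*Bd + B*gd)) + C*(g*A)*(g*B) - R*(g*B)^2
     = g^2*(z*(Ad*B - A*Bd) + C*A*B - R*B^2)"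
  by (simp add: algebra_simps eval_nat_numeral)

lemma Jf_scale: "Jf C R (g*A) (g*B) = g^2 * Jf C R A B"
  unfolding Jf_def pderiv_mult by (rule absC)

lemma ZZ_pderiv_power: "ZZ * pderiv (ZZ^n) = of_nat n * ZZ^n"
proof (cases n)
  case 0 then show ?thesis by simp
next
  case (Suc m)
  have "ZZ * pderiv (ZZ^n) = ZZ * (smult (of_nat (Suc m)) (ZZ ^ m) * 1)"
    by (simp only: Suc pderiv_power_Suc pderiv_ZZ)
  also have "\<dots> = of_nat n * ZZ^n" by (simp add: Suc of_nat_poly algebra_simps)
  finally show ?thesis .
qed

lemma G_lemma:
  assumes Td: "Td \<noteq> 0" and J: "Jf C R Tn Td = 0"
  shows "\<exists>V n. ZZ * pderiv V + (C - of_nat n) * V = R * ZZ^n"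
proof -
  define g where "g = gcd Tn Td"
  have g0: "g \<noteq> 0" using Td by (simp add: g_def)
  define A where "A = Tn div g"
  define B where "B = Td div g"
  have TnA: "Tn = g * A" unfolding A_def g_def by simp
  have TdB: "Td = g * B" unfolding B_def g_def by simp
  have cop: "coprime A B" unfolding A_def B_def g_def using Td by (intro div_gcd_coprime) simp
  have B0: "B \<noteq> 0" using Td TdB by auto
  have JAB: "Jf C R A B = 0" using J g0 unfolding TnA TdB Jf_scale by simp
  obtain D1 n where Bd: "B = [:- 0, 1:]^n * D1" and nd: "\<not> [:- 0, 1:] dvd D1"
    using order_decomp[OF B0] by blast
  have Bd': "B = ZZ^n * D1" using Bd by (simp add: ZZ_def)
  have nd': "\<not> ZZ dvd D1" using nd by (simp add: ZZ_def)
  have eq: "ZZ * A * pderiv B = ZZ * pderiv A * B + C * A * B - R * B^2"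
    using JAB unfolding Jf_def by (simp add: algebra_simps)
  have pB: "pderiv B = pderiv (ZZ^n) * D1 + ZZ^n * pderiv D1"
    unfolding Bd' by (simp add: pderiv_mult algebra_simps)
  have "D1 dvd ZZ * pderiv A * B + C * A * B - R * B^2"
    unfolding Bd' by (intro dvd_add dvd_diff) (simp_all add: power2_eq_square)
  then have "D1 dvd ZZ * A * pderiv B" using eq by simp
  then have "D1 dvd ZZ * A * (pderiv (ZZ^n) * D1) + ZZ * A * (ZZ^n * pderiv D1)"
    using pB by (simp add: algebra_simps)
  then have "D1 dvd (ZZ^Suc n * A) * pderiv D1"
    by (simp add: dvd_add_right_iff algebra_simps)
  moreover have "coprime D1 (ZZ^Suc n * A)"
  proof -
    have pz: "prime_elem ZZ" by (rule prime_ZZ)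
    have "coprime ZZ D1" using prime_elem_imp_coprime[OF pz nd'] .
    then have c1: "coprime D1 (ZZ^Suc n)" by (simp add: coprime_commute)
    have "coprime A D1" using cop unfolding Bd' by simp
    then show ?thesis using c1 by (simp add: coprime_commute)
  qed
  ultimately have "D1 dvd pderiv D1" using coprime_dvd_mult_right_iff by blast
  then have "pderiv D1 = 0"
  proof (rule contrapos_pp)
    assume "pderiv D1 \<noteq> 0"
    then have "degree D1 \<noteq> 0" by (simp add: pderiv_eq_0_iff)
    then have "degree (pderiv D1) < degree D1" by (simp add: degree_pderiv)
    then show "\<not> D1 dvd pderiv D1" using \<open>pderiv D1 \<noteq> 0\<close>
      by (meson dvd_imp_degree_le not_le)
  qed
  then obtain d where D1d: "D1 = [:d:]" using pderiv_iszero by blast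
  have d0: "d \<noteq> 0" using B0 Bd' D1d by auto
  define V where "V = smult (inverse d) A"
  have AV: "A = [:d:] * V" using d0 by (simp add: V_def)
  have BV: "B = [:d:] * ZZ^n" using Bd' D1d by (simp add: ac_simps)
  have "Jf C R V (ZZ^n) = 0" using JAB d0 unfolding AV BV Jf_scale by simp
  then have "ZZ^n * (ZZ * pderiv V + (C - of_nat n) * V - R * ZZ^n) = 0"
    unfolding Jf_def
  proof -
    assume h: "ZZ * (pderiv V * ZZ ^ n - V * pderiv (ZZ ^ n)) + C * V * ZZ ^ n - R * (ZZ ^ n)\<^sup>2 = 0"
    have "ZZ^n * (ZZ * pderiv V + (C - of_nat n) * V - R * ZZ^n)
        = ZZ * (pderiv V * ZZ ^ n) - V * (ZZ * pderiv (ZZ ^ n)) + C * V * ZZ ^ n - R * (ZZ ^ n)\<^sup>2"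
      using ZZ_pderiv_power[of n] by (simp add: algebra_simps power2_eq_square)
    also have "\<dots> = 0" using h by (simp add: algebra_simps)
    finally show ?thesis .
  qed
  then have "ZZ * pderiv V + (C - of_nat n) * V = R * ZZ^n" using ZZ_nz by simp
  then show ?thesis by blast
qed

lemma Red:
  fixes c0 e :: complex
  shows "ZZ * pderiv V + ([:c0:] - smult (2*e) (ZZ^2) - of_nat n) * V = ZZ * g * ZZ^n \<Longrightarrow>
   (\<exists>V. ZZ * pderiv V + ([:c0:] - smult (2*e) (ZZ^2)) * V = ZZ * g) \<or>
   (\<exists>m\<ge>1. c0 = of_nat m \<and> (\<exists>V. ZZ * pderiv V + ([:c0:] - smult (2*e) (ZZ^2) - of_nat m) * V = ZZ * g * ZZ^m))"
proof (induction n arbitrary: V)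
  case 0
  then show ?case by auto
next
  case (Suc m)
  let ?C = "[:c0:] - smult (2*e) (ZZ^2)"
  show ?case
  proof (cases "c0 = of_nat (Suc m)")
    case True
    then show ?thesis using Suc.prems by (intro disjI2 exI[of _ "Suc m"]) auto
  next
    case False
    have "poly (ZZ * pderiv V + (?C - of_nat (Suc m)) * V) 0 = poly (ZZ * g * ZZ ^ Suc m) 0"
      using Suc.prems by simp
    then have "(c0 - of_nat (Suc m)) * poly V 0 = 0" by (simp add: poly_ZZ of_nat_poly)
    then have "poly V 0 = 0" using False by simp
    then have "[:-0, 1:] dvd V" by (simp only: poly_eq_0_iff_dvd)
    then obtain V2 where V2: "V = ZZ * V2" by (auto simp: ZZ_def)
    have pV: "pderiv V = ZZ * pderiv V2 + V2" using V2 by (simp add: pderiv_mult pderiv_ZZ)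
    have "ZZ * (ZZ * pderiv V2 + (?C - of_nat m) * V2) = ZZ * (ZZ * g * ZZ^m)"
    proof -
      have "ZZ * (ZZ * pderiv V2 + (?C - of_nat m) * V2) = ZZ * pderiv V + (?C - of_nat (Suc m)) * V"
        by (simp only: pV) (simp add: V2 algebra_simps)
      also have "\<dots> = ZZ * (ZZ * g * ZZ^m)" using Suc.prems by (simp add: algebra_simps)
      finally show ?thesis .
    qed
    then have "ZZ * pderiv V2 + (?C - of_nat m) * V2 = ZZ * g * ZZ^m" using ZZ_nz by simp
    then show ?thesis using Suc.IH by blast
  qed
qed

lemma alt_pascal:
  fixes g :: "nat \<Rightarrow> complex"
  shows "(\<Sum>l\<le>Suc k. (-1)^l * of_nat (Suc k choose l) * g l)
       = (\<Sum>l\<le>k. (-1)^l * of_nat (k choose l) * (g l - g (Suc l)))"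
proof -
  have A: "(\<Sum>l\<le>Suc k. (-1)^l * of_nat (Suc k choose l) * g l)
      = g 0 + (\<Sum>l\<le>k. (-1)^Suc l * of_nat (k choose l) * g (Suc l))
            + (\<Sum>l\<le>k. (-1)^Suc l * of_nat (k choose Suc l) * g (Suc l))"
  proof -
    have "(\<Sum>l\<le>Suc k. (-1)^l * of_nat (Suc k choose l) * g l)
       = g 0 + (\<Sum>l\<le>k. (-1)^Suc l * of_nat (Suc k choose Suc l) * g (Suc l))"
      by (subst sum.atMost_Suc_shift) simp
    also have "\<dots> = g 0 + (\<Sum>l\<le>k. (-1)^Suc l * of_nat (k choose l) * g (Suc l))
            + (\<Sum>l\<le>k. (-1)^Suc l * of_nat (k choose Suc l) * g (Suc l))"
      by (simp only: binomial_Suc_Suc of_nat_add distrib_right distrib_left sum.distrib add.assoc)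
    finally show ?thesis .
  qed
  have B: "(\<Sum>l\<le>k. (-1)^l * of_nat (k choose l) * g l)
      = g 0 + (\<Sum>l\<le>k. (-1)^Suc l * of_nat (k choose Suc l) * g (Suc l))"
  proof -
    have F1: "(\<Sum>l\<le>Suc k. (-1)^l * of_nat (k choose l) * g l) = (\<Sum>l\<le>k. (-1)^l * of_nat (k choose l) * g l)"
      by simp
    have F2: "(\<Sum>l\<le>Suc k. (-1)^l * of_nat (k choose l) * g l)
        = g 0 + (\<Sum>l\<le>k. (-1)^Suc l * of_nat (k choose Suc l) * g (Suc l))"
      by (subst sum.atMost_Suc_shift) simp
    show ?thesis using trans[OF sym[OF F1] F2] .
  qed
  have C: "(\<Sum>l\<le>k. (-1)^l * of_nat (k choose l) * (g l - g (Suc l)))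
     = (\<Sum>l\<le>k. (-1)^l * of_nat (k choose l) * g l) + (\<Sum>l\<le>k. (-1)^Suc l * of_nat (k choose l) * g (Suc l))"
    by (simp add: sum_subtractf right_diff_distrib sum_negf)
  show ?thesis unfolding C A B by (simp add: algebra_simps)
qed

definition Sd :: "nat \<Rightarrow> nat \<Rightarrow> complex \<Rightarrow> complex" where
  "Sd k i \<beta> = (\<Sum>l\<le>k. (-1)^l * of_nat (k choose l) * pochhammer (\<beta> + of_nat l) i)"

lemma Sd_step: "Sd (Suc k) (Suc i) \<beta> = - of_nat (Suc i) * Sd k i (\<beta> + 1)"
proof -
  have d: "pochhammer (\<beta> + of_nat l) (Suc i) - pochhammer (\<beta> + of_nat (Suc l)) (Suc i)
      = - of_nat (Suc i) * pochhammer (\<beta> + 1 + of_nat l) i" for l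
  proof -
    have "pochhammer (\<beta> + of_nat l) (Suc i) = (\<beta> + of_nat l) * pochhammer (\<beta> + of_nat l + 1) i"
      by (simp add: pochhammer_rec)
    moreover have "pochhammer (\<beta> + of_nat (Suc l)) (Suc i) = pochhammer (\<beta> + of_nat l + 1) i * (\<beta> + of_nat l + 1 + of_nat i)"
      by (simp add: pochhammer_Suc add_ac)
    ultimately show ?thesis by (simp add: algebra_simps)
  qed
  show ?thesis
    unfolding Sd_def alt_pascal d by (simp add: sum_distrib_left algebra_simps)
qed

lemma Sd_zero: "Sd (Suc k) 0 \<beta> = 0"
proof -
  have "Sd (Suc k) 0 \<beta> = (\<Sum>l\<le>k. (-1)^l * of_nat (k choose l) * (1 - 1))"
    unfolding Sd_def using alt_pascal[of k "\<lambda>_. 1"] by simp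
  then show ?thesis by simp
qed

lemma Sd_val: "i \<le> k \<Longrightarrow> Sd k i \<beta> = (if i = k then (-1)^k * fact k else 0)"
proof (induction k arbitrary: i \<beta>)
  case 0
  then show ?case by (simp add: Sd_def)
next
  case (Suc k)
  show ?case
  proof (cases i)
    case 0 then show ?thesis by (simp add: Sd_zero)
  next
    case (Suc i')
    then have "i' \<le> k" using Suc.prems by simp
    then show ?thesis using Suc.IH[of i' "\<beta>+1"] \<open>i = Suc i'\<close>
      by (simp add: Sd_step algebra_simps)
  qed
qed

definition lf :: "(nat \<Rightarrow> complex) \<Rightarrow> complex poly \<Rightarrow> complex" where
  "lf w p = (\<Sum>j\<le>degree p. coeff p j * w j)"

lemma lf_eq: "degree p < N \<Longrightarrow> lf w p = (\<Sum>j<N. coeff p j * w j)"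
  unfolding lf_def
  by (rule sum.mono_neutral_left) (auto simp: coeff_eq_0)

lemma lf_add: "lf w (p + q) = lf w p + lf w q"
proof -
  define N where "N = Suc (max (degree p) (degree q))"
  have "degree (p + q) < N" "degree p < N" "degree q < N"
    using degree_add_le_max[of p q] by (auto simp: N_def)
  then show ?thesis by (simp add: lf_eq sum.distrib algebra_simps)
qed

lemma lf_0: "lf w 0 = 0" by (simp add: lf_def)

lemma lf_smult: "lf w (smult c p) = c * lf w p"
proof (cases "c = 0")
  case True then show ?thesis by (simp add: lf_0)
next
  case False then show ?thesis by (simp add: lf_def sum_distrib_left algebra_simps)
qed

lemma lf_sum: "finite A \<Longrightarrow> lf w (\<Sum>i\<in>A. f i) = (\<Sum>i\<in>A. lf w (f i))"
  by (induction A rule: finite_induct) (simp_all add: lf_0 lf_add)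

lemma lf_monom: "lf w (monom c j) = c * w j"
proof -
  have "lf w (monom c j) = (\<Sum>i<Suc j. coeff (monom c j) i * w i)"
    by (rule lf_eq) (simp add: le_imp_less_Suc degree_monom_le)
  also have "\<dots> = c * w j" by (simp add: coeff_monom)
  finally show ?thesis .
qed

lemma lf_diff: "lf w (p - q) = lf w p - lf w q"
  using lf_add[of w "p - q" q] by simp

lemma cc_poch: "l \<le> k \<Longrightarrow> cc k b l * pochhammer b (l + i)
    = pochhammer b k * ((-1)^l * of_nat (k choose l) * pochhammer (b + of_nat l) i)"
proof -
  assume lk: "l \<le> k"
  have p1: "pochhammer b (l + i) = pochhammer b l * pochhammer (b + of_nat l) i"
    by (rule pochhammer_product')
  have p2: "pochhammer b k = pochhammer b l * pochhammer (b + of_nat l) (k - l)"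
    using pochhammer_product'[of b l "k - l"] lk by simp
  have p3: "pochhammer (- of_nat k) l / fact l = ((-1)^l * of_nat (k choose l) :: complex)"
    by (simp add: binomial_gbinomial gbinomial_pochhammer)
  have "cc k b l * pochhammer b (l + i)
     = (pochhammer (- of_nat k) l / fact l) * (pochhammer b l * pochhammer (b + of_nat l) (k - l)) * pochhammer (b + of_nat l) i"
    unfolding cc_def p1 by (simp add: algebra_simps)
  also have "\<dots> = pochhammer b k * ((-1)^l * of_nat (k choose l) * pochhammer (b + of_nat l) i)"
    unfolding p3 p2[symmetric] by (simp add: algebra_simps)
  finally show ?thesis .
qed

lemma inner_sum: "i \<le> k \<Longrightarrow> (\<Sum>l\<le>k. cc k b l * pochhammer b (l + i))
    = pochhammer b k * (if i = k then (-1)^k * fact k else 0)"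
proof -
  assume ik: "i \<le> k"
  have "(\<Sum>l\<le>k. cc k b l * pochhammer b (l + i)) = pochhammer b k * Sd k i b"
    unfolding Sd_def sum_distrib_left by (rule sum.cong) (simp_all add: cc_poch)
  then show ?thesis using Sd_val[OF ik] by simp
qed

lemma Fp_sq: "Fp k b * Fp k b = (\<Sum>i\<le>k. \<Sum>l\<le>k. monom (cc k b i * cc k b l) (l + i))"
  unfolding Fp_def sum_distrib_right sum_distrib_left
  by (simp add: mult_monom ac_simps)

lemma cc_k: "cc k b k = (-1)^k"
  by (simp add: cc_def pochhammer_same)

lemma L_Fp_sq: "lf (pochhammer b) (Fp k b * Fp k b) = fact k * pochhammer b k"
proof -
  have "lf (pochhammer b) (Fp k b * Fp k b) = (\<Sum>i\<le>k. cc k b i * (\<Sum>l\<le>k. cc k b l * pochhammer b (l + i)))"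
    unfolding Fp_sq by (simp add: lf_sum lf_monom sum_distrib_left algebra_simps)
  also have "\<dots> = (\<Sum>i\<le>k. cc k b i * (pochhammer b k * (if i = k then (-1)^k * fact k else 0)))"
    by (rule sum.cong) (simp_all add: inner_sum)
  also have "\<dots> = cc k b k * (pochhammer b k * ((-1)^k * fact k))"
    by (simp add: if_distrib sum.delta cong: if_cong)
  also have "\<dots> = fact k * pochhammer b k"
    by (simp add: cc_k algebra_simps flip: power_add mult_2)
  finally show ?thesis .
qed

definition lam :: "complex \<Rightarrow> complex \<Rightarrow> nat \<Rightarrow> complex" where
  "lam \<beta> e j = (if odd j then pochhammer \<beta> (j div 2) * e^(j div 2) else 0)"

lemma lam_rec:
  assumes e2: "e^2 = 1"
  shows "(of_nat j + (2*\<beta> - 1)) * lam \<beta> e j = 2*e * lam \<beta> e (j+2)"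
proof (cases "odd j")
  case True
  then obtain i where j: "j = 2*i+1" by (metis oddE)
  have jd: "j div 2 = i" "(j+2) div 2 = Suc i" using j by simp_all
  have "e^(Suc i) * e = e^i" using e2 by (simp add: power2_eq_square algebra_simps)
  then have ee: "2 * e * (pochhammer \<beta> (Suc i) * e^Suc i) = 2 * pochhammer \<beta> (Suc i) * e^i"
    by (metis (no_types, lifting) mult.assoc mult.commute mult.left_commute)
  have e3: "e * e = 1" using e2 by (simp add: power2_eq_square)
  have e4: "e * (e * x) = x" for x using e3 by (simp add: mult.assoc[symmetric])
  show ?thesis using True unfolding lam_def jd
    by (simp add: pochhammer_Suc j algebra_simps e4)
next
  case False then show ?thesis by (simp add: lam_def)
qed

lemma ZZ_monom: "ZZ = monom 1 1"
  by (simp add: ZZ_def monom_Suc)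

lemma ZZ_pderiv_monom: "ZZ * pderiv (monom a i) = monom (of_nat i * a) i"
proof (cases i)
  case 0 then show ?thesis by (simp add: pderiv_monom)
next
  case (Suc j) then show ?thesis by (simp add: pderiv_monom ZZ_monom mult_monom)
qed

lemma pderiv_sum': "finite A \<Longrightarrow> pderiv (\<Sum>i\<in>A. f i) = (\<Sum>i\<in>A. pderiv (f i))"
  by (induction A rule: finite_induct) (simp_all add: pderiv_add)

definition opK :: "complex \<Rightarrow> complex \<Rightarrow> complex poly \<Rightarrow> complex poly" where
  "opK c e V = ZZ * pderiv V + ([:c:] - smult (2*e) (ZZ^2)) * V"

lemma opK_sum: "finite A \<Longrightarrow> opK c e (\<Sum>i\<in>A. f i) = (\<Sum>i\<in>A. opK c e (f i))"
  unfolding opK_def by (simp add: pderiv_sum' sum_distrib_left sum_distrib_right sum.distrib)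

lemma opK_monom: "opK c e (monom a i) = monom (of_nat i * a) i + monom (c * a) i - monom (2 * e * a) (i + 2)"
proof -
  have "ZZ^2 = monom 1 2" by (simp add: ZZ_monom monom_power)
  then show ?thesis unfolding opK_def
    by (simp add: ZZ_pderiv_monom algebra_simps mult_monom smult_monom flip: smult_as_mult)
qed

lemma Kill:
  assumes e2: "e^2 = 1"
  shows "lf (lam \<beta> e) (opK (2*\<beta> - 1) e V) = 0"
proof -
  have "opK (2*\<beta> - 1) e V = (\<Sum>i\<le>degree V. opK (2*\<beta> - 1) e (monom (coeff V i) i))"
    by (subst poly_as_sum_of_monoms[symmetric, of V]) (simp add: opK_sum)
  then have "lf (lam \<beta> e) (opK (2*\<beta> - 1) e V) = (\<Sum>i\<le>degree V. lf (lam \<beta> e) (opK (2*\<beta> - 1) e (monom (coeff V i) i)))"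
    by (simp add: lf_sum)
  also have "\<dots> = (\<Sum>i\<le>degree V. coeff V i * ((of_nat i + (2*\<beta> - 1)) * lam \<beta> e i - 2*e * lam \<beta> e (i+2)))"
    by (rule sum.cong) (simp_all add: opK_monom lf_add lf_diff lf_monom algebra_simps)
  also have "\<dots> = 0" by (simp add: lam_rec[OF e2])
  finally show ?thesis .
qed

lemma pcompose_Xpow: "([:0,1:]^n) \<circ>\<^sub>p q = q^n"
  by (induction n) (simp_all add: pcompose_mult pcompose_pCons pcompose_1)

lemma monom_pcompose_q: fixes c e :: complex shows "monom c j \<circ>\<^sub>p [:0, 0, e:] = monom (c * e^j) (2*j)"
proof -
  have q: "[:0, 0, e:] = monom e 2" by (rule poly_eqI) (simp add: coeff_pCons coeff_monom split: nat.split)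
  have m: "monom c j = smult c ([:0,1:]^j)" by (rule monom_altdef)
  have "monom c j \<circ>\<^sub>p [:0, 0, e:] = smult c ([:0, 0, e:]^j)"
    by (simp only: m pcompose_smult pcompose_Xpow)
  also have "\<dots> = monom (c * e^j) (2*j)" unfolding q monom_power smult_monom by (simp add: mult.commute)
  finally show ?thesis .
qed

lemma Lam_eval:
  assumes e2: "e^2 = 1"
  shows "lf (lam \<beta> e) (ZZ^(2*m+1) * (h \<circ>\<^sub>p [:0,0,e:])) = e^m * (\<Sum>j\<le>degree h. coeff h j * pochhammer \<beta> (j + m))"
proof -
  have "ZZ^(2*m+1) * (h \<circ>\<^sub>p [:0,0,e:]) = (\<Sum>j\<le>degree h. monom (coeff h j * e^j) (2*j + (2*m+1)))"
    apply (subst poly_as_sum_of_monoms[symmetric, of h])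
    by (simp add: pcompose_sum monom_pcompose_q ZZ_monom monom_power sum_distrib_left mult_monom ac_simps)
  then have "lf (lam \<beta> e) (ZZ^(2*m+1) * (h \<circ>\<^sub>p [:0,0,e:])) = (\<Sum>j\<le>degree h. coeff h j * e^j * lam \<beta> e (2*j + (2*m+1)))"
    by (simp add: lf_sum lf_monom)
  also have "\<dots> = (\<Sum>j\<le>degree h. e^m * (coeff h j * pochhammer \<beta> (j + m)))"
  proof (rule sum.cong)
    fix j
    have d: "(2*j + (2*m+1)) div 2 = j + m" by simp
    have o: "odd (2*j + (2*m+1))" by simp
    have E1: "e^j * e^(j+m) = e^(2*j) * e^m" by (simp add: power_add[symmetric] mult_2 add.assoc)
    have E2: "e^(2*j) = 1" using e2 by (simp add: power_mult)
    have "coeff h j * e^j * lam \<beta> e (2*j + (2*m+1)) = coeff h j * pochhammer \<beta> (j+m) * (e^j * e^(j+m))"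
      unfolding lam_def d using o by (simp add: ac_simps)
    also have "\<dots> = e^m * (coeff h j * pochhammer \<beta> (j + m))" unfolding E1 E2 by (simp only: mult_1 ac_simps)
    finally show "coeff h j * e^j * lam \<beta> e (2*j + (2*m+1)) = e^m * (coeff h j * pochhammer \<beta> (j + m))" .
  qed simp
  finally show ?thesis by (simp add: sum_distrib_left)
qed

lemma Yfun_alt:
  fixes e b :: complex
  assumes "e = of_int \<epsilon>1" "b = 2 * of_int \<epsilon>1 * of_int \<epsilon>2 * \<nu> + 1"
  shows "Yfun \<nu> k \<epsilon>1 \<epsilon>2 = (\<lambda>z. z powr b * exp (- e * z^2 / 2) * poly (fz k b e) z)"
proof
  fix z
  show "Yfun \<nu> k \<epsilon>1 \<epsilon>2 z = z powr b * exp (- e * z^2 / 2) * poly (fz k b e) z"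
    unfolding Yfun_def assms Let_def fz_def poly_pcompose poly_Fp[symmetric]
    by (simp add: power2_eq_square ac_simps)
qed

lemma Re_pos_not_nonpos: "0 < Re z \<Longrightarrow> z \<notin> \<real>\<^sub>\<le>\<^sub>0"
  by (auto simp: complex_nonpos_Reals_iff)

lemma Yfun_deriv:
  fixes e b z :: complex
  assumes eb: "e = of_int \<epsilon>1" "b = 2 * of_int \<epsilon>1 * of_int \<epsilon>2 * \<nu> + 1" and z: "0 < Re z"
  shows "deriv (Yfun \<nu> k \<epsilon>1 \<epsilon>2) z = z powr b * exp (- e * z^2 / 2) *
     (b / z * poly (fz k b e) z - e * z * poly (fz k b e) z + poly (pderiv (fz k b e)) z)"
proof -
  have z0: "z \<noteq> 0" using z by auto
  have nr: "z \<notin> \<real>\<^sub>\<le>\<^sub>0" using Re_pos_not_nonpos[OF z] .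
  have D: "((\<lambda>z. z powr b * exp (- e * z^2 / 2) * poly (fz k b e) z) has_field_derivative
      (b * z powr (b - 1) * exp (- e * z^2 / 2) + z powr b * (exp (- e * z^2 / 2) * (- e * (2 * z) / 2))) * poly (fz k b e) z
      + z powr b * exp (- e * z^2 / 2) * poly (pderiv (fz k b e)) z) (at z)"
    by (intro DERIV_mult has_field_derivative_powr[OF nr] DERIV_chain2[OF DERIV_exp] poly_DERIV
        derivative_eq_intros) (use nr in auto)
  have pw: "z powr (b - 1) = z powr b / z" using z0 by (simp add: powr_diff powr_to_1)
  show ?thesis
    unfolding Yfun_alt[OF eb] using DERIV_imp_deriv[OF D] unfolding pw
    using z0 by (simp add: field_simps)
qed

lemma Yfun_nz_iff:
  fixes e b z :: complex
  assumes eb: "e = of_int \<epsilon>1" "b = 2 * of_int \<epsilon>1 * of_int \<epsilon>2 * \<nu> + 1" and z: "0 < Re z"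
  shows "Yfun \<nu> k \<epsilon>1 \<epsilon>2 z \<noteq> 0 \<longleftrightarrow> poly (fz k b e) z \<noteq> 0"
  using z unfolding Yfun_alt[OF eb] by auto

lemma M0_eq:
  fixes e b z :: complex
  assumes eb: "e = of_int \<epsilon>1" "b = 2 * of_int \<epsilon>1 * of_int \<epsilon>2 * \<nu> + 1" and z: "0 < Re z"
    and f0: "poly (fz k b e) z \<noteq> 0"
  shows "poly (N0 k b e) z / (z * poly (fz k b e) z) = - deriv (Yfun \<nu> k \<epsilon>1 \<epsilon>2) z / Yfun \<nu> k \<epsilon>1 \<epsilon>2 z"
proof -
  have z0: "z \<noteq> 0" using z by auto
  have p0: "z powr b \<noteq> 0" using z0 by simp
  show ?thesis
    unfolding Yfun_deriv[OF eb z] unfolding Yfun_alt[OF eb] N0_def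
    using z0 f0 p0 by (simp add: field_simps power2_eq_square)
qed

lemma W_exists:
  fixes e :: complex
  assumes e: "e \<noteq> 0"
  shows "\<exists>W. pderiv W - smult e W = p"
proof (induction "degree p" arbitrary: p rule: less_induct)
  case less
  show ?case
  proof (cases "degree p = 0")
    case True
    then obtain c where p: "p = [:c:]" by (meson degree_eq_zeroE)
    have "pderiv [:- c / e:] - smult e [:- c / e:] = p" using e by (simp add: p)
    then show ?thesis by blast
  next
    case False
    then have "degree (pderiv p) < degree p" by (simp add: degree_pderiv)
    then obtain W1 where W1: "pderiv W1 - smult e W1 = pderiv p" using less by blast
    have "pderiv (smult (1/e) (W1 - p)) - smult e (smult (1/e) (W1 - p)) = p"
    proof -
      have "pderiv (smult (1/e) (W1 - p)) - smult e (smult (1/e) (W1 - p))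
          = smult (1/e) (pderiv W1 - smult e W1 - pderiv p) + p"
        using e by (simp add: pderiv_smult pderiv_diff algebra_simps smult_diff_right smult_add_right)
      then show ?thesis using W1 by simp
    qed
    then show ?thesis by blast
  qed
qed

lemma Fp_nz: "Fp k b \<noteq> 0"
proof
  assume "Fp k b = 0"
  then have "coeff (Fp k b) k = 0" by simp
  then show False by (simp add: coeff_Fp cc_k)
qed

lemma fz_nz: "e \<noteq> 0 \<Longrightarrow> fz k b e \<noteq> 0"
  unfolding fz_def using Fp_nz pcompose_eq_0 by fastforce

lemma W_compose:
  fixes e :: complex
  assumes W: "pderiv W - smult e W = p"
  shows "pderiv (W \<circ>\<^sub>p [:0,0,1:]) = 2 * [:e:] * ZZ * (W \<circ>\<^sub>p [:0,0,1:]) + 2 * ZZ * (p \<circ>\<^sub>p [:0,0,1:])"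
proof -
  have W': "pderiv W = smult e W + p" using W by (simp add: algebra_simps)
  have d: "pderiv [:0,0,1::complex:] = 2 * ZZ" by (simp add: ZZ_def pderiv_pCons numeral_poly)
  show ?thesis
    unfolding pderiv_pcompose W' d by (simp add: pcompose_add pcompose_smult algebra_simps)
qed

lemma Z2_eq: "[:0,0,1::complex:] = ZZ^2"
  by (simp add: ZZ_def power2_eq_square)

lemma ZZ_pow_compose: "ZZ^n \<circ>\<^sub>p [:0,0,1::complex:] = ZZ^(2*n)"
  unfolding ZZ_def pcompose_Xpow by (simp add: power_mult power2_eq_square)

lemma fz_compose: "fz k b e = (Fp k b \<circ>\<^sub>p [:0, e:]) \<circ>\<^sub>p [:0,0,1:]"
  by (simp add: fz_def pcompose_assoc[symmetric] pcompose_pCons)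

lemma AC1:
  fixes Z w wd T Td f E N c :: "'a::comm_ring_1"
  assumes "wd = 2*E*Z*w + T*f^2" "Z*Td = N*T" "c = N"
  shows "Z*(wd*T - w*Td) + (c - 2*E*Z^2)*w*T - Z*f^2*T^2 = 0"
proof -
  have "Z*(wd*T - w*Td) + (c - 2*E*Z^2)*w*T - Z*f^2*T^2
     = Z*T*(wd - (2*E*Z*w + T*f^2)) - w*(Z*Td - N*T) + (c - N)*w*T"
    by (simp add: algebra_simps power2_eq_square)
  then show ?thesis using assms by simp
qed

lemma AC2:
  fixes Z w wd M Md g E N c F2 :: "'a::comm_ring_1"
  assumes "wd = 2*E*Z*w + M*Z^2*g^2" "Z*Md = N*M" "c = -N" "F2 = M^2*Z^2*g^2"
  shows "Z*((M*wd + w*Md)*1 - (M*w)*0) + (c - 2*E*Z^2)*(M*w)*1 - Z*F2*1^2 = 0"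
proof -
  have "Z*((M*wd + w*Md)*1 - (M*w)*0) + (c - 2*E*Z^2)*(M*w)*1 - Z*F2*1^2
     = Z*M*(wd - (2*E*Z*w + M*Z^2*g^2)) + w*(Z*Md - N*M) + (c + N)*M*w - Z*(F2 - M^2*Z^2*g^2)"
    by (simp add: algebra_simps power2_eq_square eval_nat_numeral)
  then show ?thesis using assms by simp
qed

lemma smult2e: "smult (2*e) (ZZ^2) = 2*[:e:]*ZZ^2"
  by (simp add: numeral_poly mult.commute)

lemma T_case1:
  fixes e b :: complex
  assumes e2: "e^2 = 1" and b: "b = of_nat s + 1"
  shows "\<exists>Tn Td. Td \<noteq> 0 \<and> Jf ([:2*b - 1:] - smult (2*e) (ZZ^2)) (ZZ * (fz k b e)^2) Tn Td = 0"
proof -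
  have e0: "e \<noteq> 0" using e2 by auto
  define Fe where "Fe = Fp k b \<circ>\<^sub>p [:0, e:]"
  define p where "p = smult (1/2) (ZZ^s * Fe^2)"
  obtain W where W: "pderiv W - smult e W = p" using W_exists[OF e0] by blast
  define w where "w = W \<circ>\<^sub>p [:0,0,1:]"
  have fz: "fz k b e = Fe \<circ>\<^sub>p [:0,0,1:]" unfolding Fe_def by (rule fz_compose)
  have pc: "p \<circ>\<^sub>p [:0,0,1:] = smult (1/2) (ZZ^(2 * s) * (fz k b e)^2)"
    unfolding p_def fz by (simp add: pcompose_smult pcompose_mult ZZ_pow_compose power2_eq_square)
  have wd: "pderiv w = 2*[:e:]*ZZ*w + ZZ^(2 * s+1) * (fz k b e)^2"
  proof -
    have h: "smult (1/2) (2 * X) = (X::complex poly)" for X by (simp add: numeral_poly)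
    show ?thesis unfolding w_def W_compose[OF W] unfolding w_def[symmetric] pc
      using h[of "ZZ * (ZZ ^ (2 * s) * (fz k b e)\<^sup>2)"] by (simp add: algebra_simps)
  qed
  have T: "ZZ * pderiv (ZZ^(2 * s+1)) = of_nat (2 * s+1) * ZZ^(2 * s+1)" by (rule ZZ_pderiv_power)
  have c: "[:2*b - 1:] = (of_nat (2 * s+1) :: complex poly)" unfolding b by (simp add: of_nat_poly)
  have "Jf ([:2*b - 1:] - smult (2*e) (ZZ^2)) (ZZ * (fz k b e)^2) w (ZZ^(2 * s+1)) = 0"
    unfolding Jf_def smult2e
    by (rule AC1[OF wd T c])
  then show ?thesis using ZZ_nz by (intro exI[of _ w] exI[of _ "ZZ^(2 * s+1)"]) simp
qed

lemma cc_zero_low: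
  assumes b: "b = 1 - of_nat r" and rk: "r \<le> k" and j: "j < r"
  shows "cc k b j = 0"
proof -
  have "pochhammer (b + of_nat j) (k - j) = 0"
    unfolding pochhammer_eq_0_iff
  proof (intro exI conjI)
    show "r - 1 - j < k - j" using rk j by simp
    show "b + of_nat j = - of_nat (r - 1 - j)" using j unfolding b by (simp add: of_nat_diff)
  qed
  then show ?thesis by (simp add: cc_def)
qed

lemma low_coeffs_dvd: "(\<forall>j<r. coeff p j = 0) \<Longrightarrow> \<exists>G. p = ZZ^r * G"
proof (induction r arbitrary: p)
  case 0 then show ?case by auto
next
  case (Suc r)
  obtain a q where p: "p = pCons a q" by (cases p) auto
  have a: "a = 0" using Suc.prems p by (metis coeff_pCons_0 zero_less_Suc)
  have "\<forall>j<r. coeff q j = 0" using Suc.prems p by (metis Suc_mono coeff_pCons_Suc)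
  then obtain G where "q = ZZ^r * G" using Suc.IH by blast
  then have "p = ZZ^Suc r * G" using p a by (simp add: ZZ_def)
  then show ?case by blast
qed

lemma pcompose_power: "(p^n) \<circ>\<^sub>p q = (p \<circ>\<^sub>p q)^n"
  by (induction n) (simp_all add: pcompose_mult pcompose_1)

lemma T_case2:
  fixes e b :: complex
  assumes e2: "e^2 = 1" and b: "b = 1 - of_nat r" and r1: "1 \<le> r" and rk: "r \<le> k"
  shows "\<exists>Tn Td. Td \<noteq> 0 \<and> Jf ([:2*b - 1:] - smult (2*e) (ZZ^2)) (ZZ * (fz k b e)^2) Tn Td = 0"
proof -
  have e0: "e \<noteq> 0" using e2 by auto
  obtain r' where r': "r = Suc r'" using r1 by (cases r) auto
  have "\<forall>j<r. coeff (Fp k b) j = 0" using cc_zero_low[OF b rk] by (simp add: coeff_Fp)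
  then obtain G where G: "Fp k b = ZZ^r * G" using low_coeffs_dvd by blast
  define Ge where "Ge = G \<circ>\<^sub>p [:0, e:]"
  define g where "g = Ge \<circ>\<^sub>p [:0,0,1:]"
  define p where "p = smult (1/2) (ZZ^r * Ge^2)"
  obtain W where W: "pderiv W - smult e W = p" using W_exists[OF e0] by blast
  define w where "w = W \<circ>\<^sub>p [:0,0,1:]"
  have fz1: "fz k b e = ([:0,e:]^r \<circ>\<^sub>p [:0,0,1:]) * g"
    unfolding fz_compose G g_def Ge_def by (simp add: pcompose_mult ZZ_def pcompose_Xpow)
  have ez: "[:0,e:] \<circ>\<^sub>p [:0,0,1:] = smult e (ZZ^2)"
    by (simp add: pcompose_pCons ZZ_def power2_eq_square)
  have fz2: "fz k b e = smult (e^r) (ZZ^(2*r)) * g"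
    unfolding fz1 pcompose_power ez by (simp add: smult_power power_mult)
  have er0: "e^r * e^r = (e^2)^r" by (simp only: power_mult_distrib[symmetric] power2_eq_square)
  have er: "e^r * e^r = 1" unfolding er0 e2 by simp
  have fzsq: "(fz k b e)^2 = ZZ^(2*(2*r'+1)) * ZZ^2 * g^2"
  proof -
    have "(fz k b e)^2 = smult (e^r * e^r) (ZZ^(2*r) * ZZ^(2*r)) * g^2"
      unfolding fz2 by (simp add: power2_eq_square algebra_simps)
    also have "\<dots> = ZZ^(2*(2*r'+1)) * ZZ^2 * g^2"
    proof -
      have "ZZ^(2*r) * ZZ^(2*r) = ZZ^(2*(2*r'+1)) * ZZ^2"
        unfolding power_add[symmetric] by (rule arg_cong[where f="\<lambda>n. ZZ^n"]) (simp add: r')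
      then show ?thesis unfolding er by simp
    qed
    finally show ?thesis .
  qed
  have pc: "p \<circ>\<^sub>p [:0,0,1:] = smult (1/2) (ZZ^(2*r) * g^2)"
    unfolding p_def g_def by (simp add: pcompose_smult pcompose_mult ZZ_pow_compose power2_eq_square)
  define M where "M = ZZ^(2*r'+1)"
  have wd: "pderiv w = 2*[:e:]*ZZ*w + M*ZZ^2*g^2"
  proof -
    have h: "smult (1/2) (2 * X) = (X::complex poly)" for X by (simp add: numeral_poly)
    have "pderiv w = 2*[:e:]*ZZ*w + ZZ * (ZZ^(2*r) * g^2)"
      unfolding w_def W_compose[OF W] unfolding w_def[symmetric] pc
      using h[of "ZZ * (ZZ ^ (2 * r) * g\<^sup>2)"] by (simp add: algebra_simps)
    also have "ZZ * (ZZ^(2*r) * g^2) = M*ZZ^2*g^2"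
      unfolding M_def r' by (simp add: power_add[symmetric] power2_eq_square mult.assoc[symmetric] power_Suc2[symmetric])
    finally show ?thesis .
  qed
  have Md: "ZZ * pderiv M = of_nat (2*r'+1) * M" unfolding M_def by (rule ZZ_pderiv_power)
  have c: "[:2*b - 1:] = - (of_nat (2*r'+1) :: complex poly)" unfolding b r' by (simp add: of_nat_poly)
  have MM: "ZZ^(2*(2*r'+1)) = M^2" unfolding M_def by (simp only: power_mult[symmetric] mult.commute)
  have F2: "(fz k b e)^2 = M^2*ZZ^2*g^2" by (simp only: fzsq MM)
  have "Jf ([:2*b - 1:] - smult (2*e) (ZZ^2)) (ZZ * (fz k b e)^2) (M * w) 1 = 0"
    unfolding Jf_def smult2e pderiv_mult pderiv_1
    by (rule AC2[OF wd Md c F2])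
  then show ?thesis by (intro exI[of _ "M * w"] exI[of _ 1]) simp
qed

lemma h0_scale: "h0 \<nu> E0 (g*A) (g*D) = g^2 * h0 \<nu> E0 A D"
proof -
  have abs: "(g*A)^2*z^2 + (g*A)*(g*D)*z - ((g*Ad + A*gd)*(g*D) - (g*A)*(g*Dd + D*gd))*z^2 + w*(g*D)^2
     = g^2*(A^2*z^2 + A*D*z - (Ad*D - A*Dd)*z^2 + w*D^2)"
    for g A D gd Ad Dd z w :: "complex poly"
    by (simp add: algebra_simps power2_eq_square)
  show ?thesis unfolding h0_def pderiv_mult by (rule abs)
qed

lemma h1_build:
  fixes b e :: complex
  shows "h1g \<nu> E0 ((fz k b e * Td) * N0 k b e) ((fz k b e * Td) * (Zp * fz k b e)) (Zp * Tn) 0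
    = -(Zp^3 * (fz k b e)^2 * Jf ([:2*b - 1:] - smult (2*e) (ZZ^2)) (ZZ * (fz k b e)^2) Tn Td)"
proof -
  define F where "F = fz k b e"
  define Z where "Z = (Zp :: complex poly)"
  define BB where "BB = [:b:]"
  define EE where "EE = [:e:]"
  have pZ: "pderiv Z = 1" by (simp add: Z_def pderiv_pCons)
  have N: "N0 k b e = -(BB*F - EE*Z^2*F + Z*pderiv F)" unfolding N0_alt BB_def EE_def Z_def F_def ..
  have ZZ: "ZZ = Z" by (simp add: ZZ_def Z_def)
  have c1: "[:2*b - 1:] = 2*BB - 1" by (simp add: BB_def numeral_poly mult.commute one_pCons)
  have c2: "smult (2*e) (ZZ^2) = 2*EE*Z^2" by (simp only: ZZ[symmetric] EE_def smult2e)
  have X: "h1g \<nu> E0 ((F * Td) * (-(BB*F - EE*Z^2*F + Z*pderiv F))) ((F * Td) * (Z * F)) (Z * Tn) 0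
    = -(Z^3 * F^2 * (Z*(pderiv Tn*Td - Tn*pderiv Td) + (2*BB - 1 - 2*EE*Z^2)*Tn*Td - Z*F^2*Td^2))"
    unfolding h1g_def Z_def[symmetric]
    by (simp add: pderiv_mult pZ) (simp add: algebra_simps power2_eq_square power3_eq_cube)
  show ?thesis
    apply (unfold Jf_def)
    apply (unfold c1 c2)
    apply (unfold ZZ N)
    apply (fold F_def Z_def)
    by (rule X)
qed

lemma Build:
  fixes b e E0 \<nu> :: complex
  assumes eb: "e = of_int \<epsilon>1" "b = 2 * of_int \<epsilon>1 * of_int \<epsilon>2 * \<nu> + 1"
    and e2: "e^2 = 1" and E0: "E0 = 2*e*(2 * of_nat k + b)" and nu: "4*\<nu>^2 - 1 = b^2 - 2*b"
    and Td: "Td \<noteq> 0" and J: "Jf ([:2*b - 1:] - smult (2*e) (ZZ^2)) (ZZ * (fz k b e)^2) Tn Td = 0"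
  shows "\<exists>P Q :: complex poly poly.
            poly Q [:E0:] \<noteq> 0 \<and>
            (\<forall>z. Re z > 0 \<longrightarrow> Yfun \<nu> k \<epsilon>1 \<epsilon>2 z \<noteq> 0 \<longrightarrow> poly (poly Q [:E0:]) z \<noteq> 0 \<longrightarrow>
                 poly (poly P [:E0:]) z / poly (poly Q [:E0:]) z
                   = - deriv (Yfun \<nu> k \<epsilon>1 \<epsilon>2) z / Yfun \<nu> k \<epsilon>1 \<epsilon>2 z) \<and>
            [:[:- E0:], 1:]^2 dvd Hnum \<nu> P Q"
proof -
  define f where "f = fz k b e"
  have e0: "e \<noteq> 0" using e2 by auto
  have f0: "f \<noteq> 0" unfolding f_def using fz_nz[OF e0] .
  define g where "g = f * Td"
  define A where "A = g * N0 k b e"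
  define D where "D = g * (Zp * f)"
  define B where "B = Zp * Tn"
  define P where "P = [:A:] + [:-[:E0:], 1:] * [:B:]"
  define Q where "Q = [:D:]"
  have g0: "g \<noteq> 0" using f0 Td by (simp add: g_def)
  have D0: "D \<noteq> 0" using g0 f0 by (simp add: D_def)
  have PE: "poly P [:E0:] = A" by (simp add: P_def)
  have QE: "poly Q [:E0:] = D" by (simp add: Q_def)
  have dP: "pderiv P = [:B:]" by (simp add: P_def pderiv_add pderiv_mult pderiv_pCons)
  have dPE: "poly (pderiv P) [:E0:] = B" by (simp add: dP)
  have dQE: "poly (pderiv Q) [:E0:] = 0" by (simp add: Q_def)
  have H0: "h0 \<nu> E0 A D = 0"
    unfolding A_def D_def h0_scale f_def using H0_N0[OF E0 nu e2] by simp
  have H1: "h1g \<nu> E0 A D B 0 = 0"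
    unfolding A_def D_def B_def g_def f_def h1_build J by simp
  have dvd: "[:[:- E0:], 1:]^2 dvd Hnum \<nu> P Q"
  proof -
    have m: "[:- E0:] = - [:E0:]" by simp
    show ?thesis unfolding m dvd2_iff EV0 EV1 PE QE dPE dQE H0 H1 by simp
  qed
  have hfun: "poly (poly P [:E0:]) z / poly (poly Q [:E0:]) z
                   = - deriv (Yfun \<nu> k \<epsilon>1 \<epsilon>2) z / Yfun \<nu> k \<epsilon>1 \<epsilon>2 z"
    if z: "Re z > 0" and Y: "Yfun \<nu> k \<epsilon>1 \<epsilon>2 z \<noteq> 0" and Qz: "poly (poly Q [:E0:]) z \<noteq> 0" for z
  proof -
    have fz0: "poly f z \<noteq> 0" using Yfun_nz_iff[OF eb z] Y by (simp add: f_def)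
    have gz: "poly g z \<noteq> 0" using Qz by (simp add: QE D_def)
    have "poly A z / poly D z = poly (N0 k b e) z / (z * poly f z)"
      using gz by (simp add: A_def D_def)
    also have "\<dots> = - deriv (Yfun \<nu> k \<epsilon>1 \<epsilon>2) z / Yfun \<nu> k \<epsilon>1 \<epsilon>2 z"
      using M0_eq[OF eb z] fz0 by (simp add: f_def)
    finally show ?thesis by (simp add: PE QE)
  qed
  show ?thesis
    by (rule exI[of _ P], rule exI[of _ Q]) (use D0 QE dvd hfun in auto)
qed

lemma absAB:
  fixes z EE KK p0 p0d q0 q0d p1 p1d q1 q1d b e f f1 :: "'a::comm_ring_1"
  assumes h0: "p0^2*z^2 + p0*q0*z - (p0d*q0 - p0*q0d)*z^2 + (z^2*EE - z^4 - KK)*q0^2 = 0"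
    and h1: "2*p0*p1*z^2 + (p1*q0 + p0*q1)*z - (p1d*q0 + p0d*q1 - p1*q0d - p0*q1d)*z^2 + z^2*q0^2 + (z^2*EE - z^4 - KK)*(2*q0*q1) = 0"
    and rel: "p0*(z*f) = (-(b*f - e*z^2*f + z*f1))*q0"
  shows "z^2 * (z*((2*f*f1*(p1*q0 - p0*q1) + f^2*(p1d*q0 + p1*q0d - p0d*q1 - p0*q1d))*q0^2 - f^2*(p1*q0 - p0*q1)*(2*q0*q0d))
     + (2*b - 1 - 2*e*z^2)*(f^2*(p1*q0 - p0*q1))*(q0^2) - z*f^2*(q0^2)^2) = 0"
proof -
  define H0 where "H0 = p0^2*z^2 + p0*q0*z - (p0d*q0 - p0*q0d)*z^2 + (z^2*EE - z^4 - KK)*q0^2"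
  define H1 where "H1 = 2*p0*p1*z^2 + (p1*q0 + p0*q1)*z - (p1d*q0 + p0d*q1 - p1*q0d - p0*q1d)*z^2 + z^2*q0^2 + (z^2*EE - z^4 - KK)*(2*q0*q1)"
  define Rl where "Rl = p0*(z*f) - (-(b*f - e*z^2*f + z*f1))*q0"
  have "z^2 * (z*((2*f*f1*(p1*q0 - p0*q1) + f^2*(p1d*q0 + p1*q0d - p0d*q1 - p0*q1d))*q0^2 - f^2*(p1*q0 - p0*q1)*(2*q0*q0d))
     + (2*b - 1 - 2*e*z^2)*(f^2*(p1*q0 - p0*q1))*(q0^2) - z*f^2*(q0^2)^2)
     = -(z*f^2*q0^2*H1) + 2*z*f^2*q0*q1*H0 + 2*f*q0*(p1*q0 - p0*q1)*z^2*Rl"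
    unfolding H0_def H1_def Rl_def by (simp add: algebra_simps eval_nat_numeral)
  moreover have "H0 = 0" "H1 = 0" "Rl = 0" using h0 h1 rel by (simp_all add: H0_def H1_def Rl_def)
  ultimately show ?thesis by simp
qed

lemma poly_zero_from_agree:
  fixes p f q :: "complex poly"
  assumes f0: "f \<noteq> 0" and q0: "q \<noteq> 0"
    and ag: "\<And>z. Re z > 0 \<Longrightarrow> poly f z \<noteq> 0 \<Longrightarrow> poly q z \<noteq> 0 \<Longrightarrow> poly p z = 0"
  shows "p = 0"
proof (rule ccontr)
  assume p0: "p \<noteq> 0"
  define S where "S = {z. poly p z = 0} \<union> {z. poly f z = 0} \<union> {z. poly q z = 0}"
  have fin: "finite S" unfolding S_def using p0 f0 q0 by (simp add: poly_roots_finite)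
  have inf: "infinite (range (\<lambda>n. of_nat (Suc n) :: complex))"
    by (rule range_inj_infinite) (simp add: inj_on_def)
  have "infinite (range (\<lambda>n. of_nat (Suc n) :: complex) - S)" using inf fin by simp
  then obtain z where z: "z \<in> range (\<lambda>n. of_nat (Suc n) :: complex)" "z \<notin> S"
    by (metis Diff_iff finite.emptyI ex_in_conv)
  have "Re z > 0" using z(1) by auto
  then have "poly p z = 0" using ag z(2) unfolding S_def by auto
  then show False using z(2) unfolding S_def by auto
qed

lemma Extract:
  fixes b e E0 \<nu> :: complex
  assumes eb: "e = of_int \<epsilon>1" "b = 2 * of_int \<epsilon>1 * of_int \<epsilon>2 * \<nu> + 1"
    and e2: "e^2 = 1"
    and Q0: "poly Q [:E0:] \<noteq> 0"
    and ag: "\<forall>z. Re z > 0 \<longrightarrow> Yfun \<nu> k \<epsilon>1 \<epsilon>2 z \<noteq> 0 \<longrightarrow> poly (poly Q [:E0:]) z \<noteq> 0 \<longrightarrow>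
                 poly (poly P [:E0:]) z / poly (poly Q [:E0:]) z
                   = - deriv (Yfun \<nu> k \<epsilon>1 \<epsilon>2) z / Yfun \<nu> k \<epsilon>1 \<epsilon>2 z"
    and dvd: "[:[:- E0:], 1:]^2 dvd Hnum \<nu> P Q"
  shows "\<exists>Tn Td. Td \<noteq> 0 \<and> Jf ([:2*b - 1:] - smult (2*e) (ZZ^2)) (ZZ * (fz k b e)^2) Tn Td = 0"
proof -
  define f where "f = fz k b e"
  have e0: "e \<noteq> 0" using e2 by auto
  have f0: "f \<noteq> 0" unfolding f_def using fz_nz[OF e0] .
  define p0 where "p0 = poly P [:E0:]"
  define q0 where "q0 = poly Q [:E0:]"
  define p1 where "p1 = poly (pderiv P) [:E0:]"
  define q1 where "q1 = poly (pderiv Q) [:E0:]"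
  have m: "[:- E0:] = - [:E0:]" by simp
  have H: "h0 \<nu> E0 p0 q0 = 0" "h1g \<nu> E0 p0 q0 p1 q1 = 0"
    using dvd unfolding m dvd2_iff EV0 EV1 p0_def q0_def p1_def q1_def by simp_all
  have rel: "p0 * (Zp * f) = N0 k b e * q0"
  proof -
    have "p0 * (Zp * f) - N0 k b e * q0 = 0"
    proof (rule poly_zero_from_agree[OF f0 Q0[folded q0_def]])
      fix z :: complex assume z: "Re z > 0" and fz0: "poly f z \<noteq> 0" and qz: "poly q0 z \<noteq> 0"
      have Y: "Yfun \<nu> k \<epsilon>1 \<epsilon>2 z \<noteq> 0" using Yfun_nz_iff[OF eb z] fz0 by (simp add: f_def)
      have "poly p0 z / poly q0 z = poly (N0 k b e) z / (z * poly f z)"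
        using ag z Y qz M0_eq[OF eb z] fz0 by (simp add: p0_def q0_def f_def)
      then show "poly (p0 * (Zp * f) - N0 k b e * q0) z = 0"
        using qz fz0 z by (auto simp: field_simps)
    qed
    then show ?thesis by simp
  qed
  define W where "W = p1*q0 - p0*q1"
  have J: "Zp^2 * (Zp*((2*f*pderiv f*(p1*q0 - p0*q1) + f^2*(pderiv p1*q0 + p1*pderiv q0 - pderiv p0*q1 - p0*pderiv q1))*q0^2 - f^2*(p1*q0 - p0*q1)*(2*q0*pderiv q0))
     + (2*[:b:] - 1 - 2*[:e:]*Zp^2)*(f^2*(p1*q0 - p0*q1))*(q0^2) - Zp*f^2*(q0^2)^2) = 0"
    by (rule absAB[OF H(1)[unfolded h0_def] H(2)[unfolded h1g_def] rel[unfolded N0_alt f_def[symmetric]]])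
  have Jf_eq: "Jf ([:2*b - 1:] - smult (2*e) (ZZ^2)) (ZZ * f^2) (f^2*W) (q0^2)
     = Zp*((2*f*pderiv f*(p1*q0 - p0*q1) + f^2*(pderiv p1*q0 + p1*pderiv q0 - pderiv p0*q1 - p0*pderiv q1))*q0^2 - f^2*(p1*q0 - p0*q1)*(2*q0*pderiv q0))
     + (2*[:b:] - 1 - 2*[:e:]*Zp^2)*(f^2*(p1*q0 - p0*q1))*(q0^2) - Zp*f^2*(q0^2)^2"
  proof -
    have ZZ: "ZZ = Zp" by (simp add: ZZ_def)
    have c1: "[:2*b - 1:] = 2*[:b:] - 1" by (simp add: numeral_poly mult.commute one_pCons)
    have d1: "pderiv (f^2*W) = 2*f*pderiv f*(p1*q0 - p0*q1) + f^2*(pderiv p1*q0 + p1*pderiv q0 - pderiv p0*q1 - p0*pderiv q1)"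
      unfolding W_def by (simp add: pderiv_mult pderiv_diff pderiv_power algebra_simps power2_eq_square)
    have d2: "pderiv (q0^2) = 2*q0*pderiv q0"
      by (simp add: pderiv_power algebra_simps numeral_poly)
    show ?thesis
      apply (unfold Jf_def)
      apply (unfold c1 smult2e)
      apply (unfold ZZ d1 d2)
      apply (unfold W_def)
      ..
  qed
  have "Zp^2 * Jf ([:2*b - 1:] - smult (2*e) (ZZ^2)) (ZZ * f^2) (f^2*W) (q0^2) = 0"
    unfolding Jf_eq using J .
  then have "Jf ([:2*b - 1:] - smult (2*e) (ZZ^2)) (ZZ * f^2) (f^2*W) (q0^2) = 0" by simp
  moreover have "q0^2 \<noteq> 0" using Q0 by (simp add: q0_def)
  ultimately show ?thesis unfolding f_def by blast
qed

lemma h_compose: "(Fp k b * Fp k b) \<circ>\<^sub>p [:0,0,e:] = (fz k b e)^2"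
  by (simp add: fz_def pcompose_mult power2_eq_square)

lemma lf_poch_sum: "lf (pochhammer b) h = (\<Sum>j\<le>degree h. coeff h j * pochhammer b (j + 0))"
  by (simp add: lf_def)

theorem mainTheorem11:
  fixes \<nu> :: complex and k :: nat and \<epsilon>1 \<epsilon>2 :: int and E0 :: complex
  assumes "\<epsilon>1 \<in> {1, -1}" and "\<epsilon>2 \<in> {1, -1}"
    and "E0 = of_int \<epsilon>1 * (4 * of_nat k + 2) + 4 * of_int \<epsilon>2 * \<nu>"
  shows "(\<exists>P Q :: complex poly poly.
            poly Q [:E0:] \<noteq> 0 \<and>
            (\<forall>z. Re z > 0 \<longrightarrow> Yfun \<nu> k \<epsilon>1 \<epsilon>2 z \<noteq> 0 \<longrightarrow> poly (poly Q [:E0:]) z \<noteq> 0 \<longrightarrow>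
                 poly (poly P [:E0:]) z / poly (poly Q [:E0:]) z
                   = - deriv (Yfun \<nu> k \<epsilon>1 \<epsilon>2) z / Yfun \<nu> k \<epsilon>1 \<epsilon>2 z) \<and>
            [:[:- E0:], 1:]^2 dvd Hnum \<nu> P Q)
         \<longleftrightarrow> 2 * of_int \<epsilon>1 * of_int \<epsilon>2 * \<nu> + of_nat k \<in> \<nat>"
proof -
  define e :: complex where "e = of_int \<epsilon>1"
  define b where "b = 2 * of_int \<epsilon>1 * of_int \<epsilon>2 * \<nu> + 1"
  have eb: "e = of_int \<epsilon>1" "b = 2 * of_int \<epsilon>1 * of_int \<epsilon>2 * \<nu> + 1" by (simp_all add: e_def b_def)
  have e2: "e^2 = 1" using assms(1) by (auto simp: e_def)
  have f2: "(of_int \<epsilon>2 :: complex)^2 = 1" using assms(2) by auto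
  have ee: "e * e = 1" using e2 by (simp add: power2_eq_square)
  have E0: "E0 = 2*e*(2 * of_nat k + b)"
  proof -
    have "2*e*(2 * of_nat k + b) = e * (4 * of_nat k + 2) + 4 * (e*e) * of_int \<epsilon>2 * \<nu>"
      by (simp add: b_def e_def algebra_simps)
    then show ?thesis using assms(3) ee by (simp add: e_def)
  qed
  have nu: "4*\<nu>^2 - 1 = b^2 - 2*b"
  proof -
    have "b^2 - 2*b = 4 * (e*e) * (of_int \<epsilon>2)^2 * \<nu>^2 - 1"
      by (simp add: b_def e_def algebra_simps power2_eq_square)
    then show ?thesis using ee f2 by simp
  qed
  have cond: "2 * of_int \<epsilon>1 * of_int \<epsilon>2 * \<nu> + of_nat k = b - 1 + of_nat k" by (simp add: b_def)
  show ?thesis unfolding cond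
  proof
    assume "\<exists>P Q :: complex poly poly.
            poly Q [:E0:] \<noteq> 0 \<and>
            (\<forall>z. Re z > 0 \<longrightarrow> Yfun \<nu> k \<epsilon>1 \<epsilon>2 z \<noteq> 0 \<longrightarrow> poly (poly Q [:E0:]) z \<noteq> 0 \<longrightarrow>
                 poly (poly P [:E0:]) z / poly (poly Q [:E0:]) z
                   = - deriv (Yfun \<nu> k \<epsilon>1 \<epsilon>2) z / Yfun \<nu> k \<epsilon>1 \<epsilon>2 z) \<and>
            [:[:- E0:], 1:]^2 dvd Hnum \<nu> P Q"
    then obtain P Q where PQ: "poly Q [:E0:] \<noteq> 0"
      "\<forall>z. Re z > 0 \<longrightarrow> Yfun \<nu> k \<epsilon>1 \<epsilon>2 z \<noteq> 0 \<longrightarrow> poly (poly Q [:E0:]) z \<noteq> 0 \<longrightarrow>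
                 poly (poly P [:E0:]) z / poly (poly Q [:E0:]) z
                   = - deriv (Yfun \<nu> k \<epsilon>1 \<epsilon>2) z / Yfun \<nu> k \<epsilon>1 \<epsilon>2 z"
      "[:[:- E0:], 1:]^2 dvd Hnum \<nu> P Q" by blast
    obtain Tn Td where T: "Td \<noteq> 0" "Jf ([:2*b - 1:] - smult (2*e) (ZZ^2)) (ZZ * (fz k b e)^2) Tn Td = 0"
      using Extract[OF eb e2 PQ] by blast
    obtain V n where V: "ZZ * pderiv V + ([:2*b - 1:] - smult (2*e) (ZZ^2) - of_nat n) * V = ZZ * (fz k b e)^2 * ZZ^n"
      using G_lemma[OF T] by blast
    define h where "h = Fp k b * Fp k b"
    have hq: "ZZ^(2*m+1) * (h \<circ>\<^sub>p [:0,0,e:]) = ZZ * (fz k b e)^2 * ZZ^(2*m)" for m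
      unfolding h_def h_compose by (simp add: algebra_simps)
    from Red[OF V] show "b - 1 + of_nat k \<in> \<nat>"
    proof
      assume "\<exists>V. ZZ * pderiv V + ([:2*b - 1:] - smult (2*e) (ZZ^2)) * V = ZZ * (fz k b e)^2"
      then obtain V where V: "opK (2*b - 1) e V = ZZ * (fz k b e)^2" by (auto simp: opK_def)
      have "lf (lam b e) (ZZ^(2*0+1) * (h \<circ>\<^sub>p [:0,0,e:])) = 0"
        unfolding hq using Kill[OF e2, of b V] V by simp
      then have "lf (pochhammer b) h = 0" unfolding Lam_eval[OF e2] lf_poch_sum by simp
      then have "pochhammer b k = 0" unfolding h_def L_Fp_sq by simp
      then obtain i where i: "i < k" "b = - of_nat i" by (auto simp: pochhammer_eq_0_iff)
      then have "b - 1 + of_nat k = of_nat (k - 1 - i)" by (simp add: of_nat_diff)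
      then show ?thesis by simp
    next
      assume "\<exists>m\<ge>1. 2*b - 1 = of_nat m \<and> (\<exists>V. ZZ * pderiv V + ([:2*b - 1:] - smult (2*e) (ZZ^2) - of_nat m) * V = ZZ * (fz k b e)^2 * ZZ^m)"
      then obtain m V where m: "m \<ge> 1" "2*b - 1 = of_nat m"
        and V: "ZZ * pderiv V + ([:2*b - 1:] - smult (2*e) (ZZ^2) - of_nat m) * V = ZZ * (fz k b e)^2 * ZZ^m" by blast
      show ?thesis
      proof (cases "odd m")
        case True
        then obtain s where s: "m = 2 * s + 1" by (metis oddE)
        then have h2: "2 * b = 2 * (of_nat s + 1)" using m(2) by (simp only: algebra_simps of_nat_add of_nat_mult) simp
        then have "b = of_nat s + 1" unfolding mult_cancel_left by simp
        then have "b - 1 + of_nat k = of_nat (s + k)" by simp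
        then show ?thesis by simp
      next
        case False
        then obtain m' where m': "m = 2*m'" by (metis evenE)
        have bm: "b = 1/2 + of_nat m'"
        proof -
          have "2*b = 2*(1/2 + of_nat m')" using m(2) unfolding m' by (simp add: algebra_simps)
          then show ?thesis unfolding mult_cancel_left by simp
        qed
        have c0: "[:2*b - 1:] - smult (2*e) (ZZ^2) - of_nat m = [:2*(1/2) - 1:] - smult (2*e) (ZZ^2)"
          unfolding m(2) by (simp add: of_nat_poly)
        have V': "opK (2*(1/2) - 1) e V = ZZ * (fz k b e)^2 * ZZ^(2*m')"
          using V[unfolded c0] unfolding m' opK_def .
        have "lf (lam (1/2) e) (ZZ^(2*m'+1) * (h \<circ>\<^sub>p [:0,0,e:])) = 0"
          unfolding hq using Kill[OF e2, of "1/2" V] V' by simp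
        then have S0: "e^m' * (\<Sum>j\<le>degree h. coeff h j * pochhammer (1/2) (j + m')) = 0"
          unfolding Lam_eval[OF e2] .
        have "(\<Sum>j\<le>degree h. coeff h j * pochhammer (1/2) (j + m'))
            = pochhammer (1/2) m' * lf (pochhammer b) h"
        proof -
          have pp: "pochhammer (1/2) (j + m') = pochhammer (1/2) m' * pochhammer b j" for j
            unfolding bm by (subst add.commute) (rule pochhammer_product')
          show ?thesis unfolding lf_def sum_distrib_left pp by (simp only: ac_simps)
        qed
        also have "\<dots> = pochhammer (1/2) m' * (fact k * pochhammer b k)"
          unfolding h_def L_Fp_sq ..
        finally have S1: "e^m' * (pochhammer (1/2) m' * (fact k * pochhammer b k)) = 0" using S0 by simp
        have n1: "pochhammer (1/2 :: complex) m' \<noteq> 0"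
        proof
          assume "pochhammer (1/2 :: complex) m' = 0"
          then obtain i where "(1/2 :: complex) = - of_nat i" by (auto simp: pochhammer_eq_0_iff)
          then have "Re (1/2 :: complex) = Re (- of_nat i :: complex)" by (rule arg_cong)
          then show False by simp
        qed
        have n2: "pochhammer b k \<noteq> 0"
        proof
          assume "pochhammer b k = 0"
          then obtain i where "b = - of_nat i" by (auto simp: pochhammer_eq_0_iff)
          then have "Re b = Re (- of_nat i)" by simp
          then show False unfolding bm by simp
        qed
        have n3: "e^m' \<noteq> 0" using e2 by auto
        show ?thesis using S1 n1 n2 n3 by simp
      qed
    qed
  next
    assume "b - 1 + of_nat k \<in> \<nat>"
    then obtain N where N: "b - 1 + of_nat k = of_nat N" by (auto elim: Nats_cases)
    have "\<exists>Tn Td. Td \<noteq> 0 \<and> Jf ([:2*b - 1:] - smult (2*e) (ZZ^2)) (ZZ * (fz k b e)^2) Tn Td = 0"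
    proof (cases "k \<le> N")
      case True
      then have "b = of_nat (N - k) + 1" using N by (simp add: of_nat_diff algebra_simps)
      then show ?thesis by (rule T_case1[OF e2])
    next
      case False
      then have "b = 1 - of_nat (k - N)" using N by (simp add: of_nat_diff algebra_simps)
      then show ?thesis by (rule T_case2[OF e2]) (use False in auto)
    qed
    then obtain Tn Td where "Td \<noteq> 0" "Jf ([:2*b - 1:] - smult (2*e) (ZZ^2)) (ZZ * (fz k b e)^2) Tn Td = 0"
      by blast
    from Build[OF eb e2 E0 nu this] show "\<exists>P Q :: complex poly poly.
            poly Q [:E0:] \<noteq> 0 \<and>
            (\<forall>z. Re z > 0 \<longrightarrow> Yfun \<nu> k \<epsilon>1 \<epsilon>2 z \<noteq> 0 \<longrightarrow> poly (poly Q [:E0:]) z \<noteq> 0 \<longrightarrow>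
                 poly (poly P [:E0:]) z / poly (poly Q [:E0:]) z
                   = - deriv (Yfun \<nu> k \<epsilon>1 \<epsilon>2) z / Yfun \<nu> k \<epsilon>1 \<epsilon>2 z) \<and>
            [:[:- E0:], 1:]^2 dvd Hnum \<nu> P Q" .
  qed
qed

end
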